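(* Let $\mathbf{P}=(P,\le,\mathcal T)$ be a $2$-separated topological poset, and let $F$ be a closed filter in $\mathbf{P}^*$. Put $B=\bigcap F$. Then $$F=\{x\in\mathbf{P}^*: B\subseteq x\}.$$ In particular, $B\neq\emptyset$.
   Context: A topological poset $(P,\le,\mathcal T)$ is a poset with a Hausdorff topology; it is $2$-separated if it admits a continuous order-embedding ($x\le y\iff f(x)\le f(y)$, $f$ injective) into a power of the two-element chain $\{0<1\}$ with the product topology. A final segment is an upward-closed subset of $P$. $\mathbf{P}^*$ denotes the set of continuous order-preserving maps $P\to\{0,1\}$, identified with the clopen final segments of $P$ (via preimage of $1$), a lattice under $\cup,\cap$, with the topology of pointwise convergence (subspace of $\{0,1\}^P$). A filter in $\mathbf{P}^*$ is a nonempty subset closed under finite intersections and under supersets within $\mathbf{P}^*$, not containing $\emptyset$; it is closed if it is closed in this topology. *)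

theory Defs
  imports "HOL-Analysis.Analysis"
begin

definition topological_poset :: "'a topology \<Rightarrow> ('a \<Rightarrow> 'a \<Rightarrow> bool) \<Rightarrow> bool" where
  "topological_poset X le \<longleftrightarrow> Hausdorff_space X \<and>
     (\<forall>x\<in>topspace X. le x x) \<and>
     (\<forall>x\<in>topspace X. \<forall>y\<in>topspace X. le x y \<and> le y x \<longrightarrow> x = y) \<and>
     (\<forall>x\<in>topspace X. \<forall>y\<in>topspace X. \<forall>z\<in>topspace X. le x y \<and> le y z \<longrightarrow> le x z)"

text \<open>The index set is taken inside the type 'a set.\<close>
definition two_separated :: "'a topology \<Rightarrow> ('a \<Rightarrow> 'a \<Rightarrow> bool) \<Rightarrow> bool" where
  "two_separated X le \<longleftrightarrow> topological_poset X le \<and>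
     (\<exists>(I :: 'a set set) (f :: 'a \<Rightarrow> 'a set \<Rightarrow> bool).
        continuous_map X (product_topology (\<lambda>i. discrete_topology (UNIV :: bool set)) I) f \<and>
        inj_on f (topspace X) \<and>
        (\<forall>x\<in>topspace X. \<forall>y\<in>topspace X. le x y \<longleftrightarrow> (\<forall>i\<in>I. f x i \<le> f y i)))"

definition final_segment :: "'a topology \<Rightarrow> ('a \<Rightarrow> 'a \<Rightarrow> bool) \<Rightarrow> 'a set \<Rightarrow> bool" where
  "final_segment X le U \<longleftrightarrow> U \<subseteq> topspace X \<and>
     (\<forall>x\<in>U. \<forall>y\<in>topspace X. le x y \<longrightarrow> y \<in> U)"

text \<open>P*: clopen final segments (= continuous order-preserving maps to {0,1}).\<close>
definition dual :: "'a topology \<Rightarrow> ('a \<Rightarrow> 'a \<Rightarrow> bool) \<Rightarrow> 'a set set" where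
  "dual X le = {U. final_segment X le U \<and> openin X U \<and> closedin X U}"

definition charfun :: "'a topology \<Rightarrow> 'a set \<Rightarrow> 'a \<Rightarrow> bool" where
  "charfun X U = (\<lambda>x\<in>topspace X. x \<in> U)"

text \<open>Topology of pointwise convergence on P*, transported: subspace of bool^P.\<close>
definition dual_topology :: "'a topology \<Rightarrow> ('a \<Rightarrow> 'a \<Rightarrow> bool) \<Rightarrow> ('a \<Rightarrow> bool) topology" where
  "dual_topology X le = subtopology (product_topology (\<lambda>x. discrete_topology (UNIV :: bool set)) (topspace X))
      (charfun X ` dual X le)"

definition dual_filter :: "'a topology \<Rightarrow> ('a \<Rightarrow> 'a \<Rightarrow> bool) \<Rightarrow> 'a set set \<Rightarrow> bool" where
  "dual_filter X le F \<longleftrightarrow> F \<subseteq> dual X le \<and> F \<noteq> {} \<and> {} \<notin> F \<and>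
     (\<forall>U\<in>F. \<forall>V\<in>F. U \<inter> V \<in> F) \<and>
     (\<forall>U\<in>F. \<forall>V\<in>dual X le. U \<subseteq> V \<longrightarrow> V \<in> F)"

definition closed_dual_filter :: "'a topology \<Rightarrow> ('a \<Rightarrow> 'a \<Rightarrow> bool) \<Rightarrow> 'a set set \<Rightarrow> bool" where
  "closed_dual_filter X le F \<longleftrightarrow> dual_filter X le F \<and> closedin (dual_topology X le) (charfun X ` F)"

end

theory Submission
  imports Defs
begin

lemma inter_in_filter:
  assumes "finite G" "G \<noteq> {}" "G \<subseteq> F" "\<forall>U\<in>F. \<forall>V\<in>F. U \<inter> V \<in> F"
  shows "\<Inter>G \<in> F"
  using assms by (induction G rule: finite_ne_induct) auto

lemma charfun_inj:
  assumes "U \<subseteq> topspace X" "V \<subseteq> topspace X" "charfun X U = charfun X V"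
  shows "U = V"
proof -
  have "\<And>p. p \<in> topspace X \<Longrightarrow> (p \<in> U) = (p \<in> V)"
    using assms(3) unfolding charfun_def by (metis restrict_apply')
  then show ?thesis using assms(1,2) by blast
qed

lemma key:
  assumes F: "closed_dual_filter X le F" and x: "x \<in> dual X le" and sub: "\<Inter>F \<subseteq> x"
  shows "x \<in> F"
proof (rule ccontr)
  assume xF: "x \<notin> F"
  let ?T = "product_topology (\<lambda>x. discrete_topology (UNIV :: bool set)) (topspace X)"
  let ?S = "charfun X ` dual X le"
  have df: "dual_filter X le F" and cl: "closedin (subtopology ?T ?S) (charfun X ` F)"
    using F unfolding closed_dual_filter_def dual_topology_def by auto
  then obtain C where C: "closedin ?T C" "charfun X ` F = C \<inter> ?S"
    by (auto simp: closedin_subtopology)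
  have Fd: "F \<subseteq> dual X le" and Fne: "F \<noteq> {}" and Fint: "\<forall>U\<in>F. \<forall>V\<in>F. U \<inter> V \<in> F"
    and Fup: "\<forall>U\<in>F. \<forall>V\<in>dual X le. U \<subseteq> V \<longrightarrow> V \<in> F"
    using df unfolding dual_filter_def by auto
  have dsub: "\<And>U. U \<in> dual X le \<Longrightarrow> U \<subseteq> topspace X"
    unfolding dual_def final_segment_def by auto
  have cx_top: "charfun X x \<in> topspace ?T"
    unfolding charfun_def by auto
  have "charfun X x \<notin> charfun X ` F"
  proof
    assume "charfun X x \<in> charfun X ` F"
    then obtain U where "U \<in> F" "charfun X x = charfun X U" by auto
    moreover have "x \<subseteq> topspace X" using dsub x by blast
    moreover have "U \<subseteq> topspace X" using dsub Fd \<open>U \<in> F\<close> by blast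
    ultimately have "x = U" using charfun_inj by metis
    with \<open>U \<in> F\<close> xF show False by simp
  qed
  moreover have "charfun X x \<in> ?S" using x by (rule imageI)
  ultimately have "charfun X x \<notin> C" using C(2) by blast
  then have mem: "charfun X x \<in> topspace ?T - C" using cx_top by auto
  have opn: "openin ?T (topspace ?T - C)" using C(1) closedin_def by blast
  from opn[unfolded openin_product_topology_alt, rule_format, OF mem]
  obtain W where W0: "finite {i \<in> topspace X. W i \<noteq> topspace (discrete_topology (UNIV::bool set))}"
     "charfun X x \<in> Pi\<^sub>E (topspace X) W" "Pi\<^sub>E (topspace X) W \<subseteq> topspace ?T - C"
    by blast
  have W: "finite {i \<in> topspace X. W i \<noteq> UNIV}"
     "charfun X x \<in> Pi\<^sub>E (topspace X) W" "Pi\<^sub>E (topspace X) W \<subseteq> topspace ?T - C"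
    using W0 by simp_all
  define K where "K = {i \<in> topspace X. W i \<noteq> UNIV}"
  have Kfin: "finite K" using W(1) K_def by simp
  have "\<forall>i\<in>K - x. \<exists>U\<in>F. i \<notin> U" using sub by auto
  then obtain Ui where Ui: "\<And>i. i \<in> K - x \<Longrightarrow> Ui i \<in> F \<and> i \<notin> Ui i" by metis
  obtain U0 where U0: "U0 \<in> F" using Fne by auto
  define G where "G = insert U0 (Ui ` (K - x))"
  have Gfin: "finite G" using Kfin unfolding G_def by simp
  have GsubF: "G \<subseteq> F" using U0 Ui unfolding G_def by blast
  have "\<Inter>G \<in> F"
    using inter_in_filter[OF Gfin _ GsubF Fint] G_def by blast
  define V where "V = x \<union> \<Inter>G"
  have GF: "\<Inter>G \<in> dual X le" using \<open>\<Inter>G \<in> F\<close> Fd by auto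
  have Vd: "V \<in> dual X le"
  proof -
    have a: "final_segment X le x" "openin X x" "closedin X x"
      and b: "final_segment X le (\<Inter>G)" "openin X (\<Inter>G)" "closedin X (\<Inter>G)"
      using x GF unfolding dual_def by auto
    have "final_segment X le V" using a(1) b(1) unfolding V_def final_segment_def by blast
    moreover have "openin X V" using a(2) b(2) unfolding V_def by (rule openin_Un)
    moreover have "closedin X V" using a(3) b(3) unfolding V_def by (rule closedin_Un)
    ultimately show ?thesis unfolding dual_def by blast
  qed
  have VF: "V \<in> F" using Fup \<open>\<Inter>G \<in> F\<close> Vd V_def by blast
  have agree: "(i \<in> V) = (i \<in> x)" if "i \<in> K" for i
  proof (cases "i \<in> x")
    case False
    then have "Ui i \<in> G" "i \<notin> Ui i" using that Ui unfolding G_def by auto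
    then show ?thesis using False unfolding V_def by blast
  qed (simp add: V_def)
  have "charfun X V \<in> Pi\<^sub>E (topspace X) W"
  proof -
    have "\<And>i. i \<in> topspace X \<Longrightarrow> charfun X V i \<in> W i"
    proof -
      fix i assume i: "i \<in> topspace X"
      show "charfun X V i \<in> W i"
      proof (cases "i \<in> K")
        case True
        then have "charfun X V i = charfun X x i" using agree i unfolding charfun_def by simp
        moreover have "charfun X x i \<in> W i" using W(2) i by auto
        ultimately show ?thesis by simp
      next
        case False then show ?thesis using i K_def by auto
      qed
    qed
    then show ?thesis unfolding charfun_def by auto
  qed
  then have "charfun X V \<notin> C" using W(3) by auto
  moreover have "charfun X V \<in> C" using C(2) VF by auto
  ultimately show False by simp
qed

theorem mainTheorem14:
  fixes X :: "'a topology" and le :: "'a \<Rightarrow> 'a \<Rightarrow> bool" and F :: "'a set set"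
  assumes "two_separated X le"
    and "closed_dual_filter X le F"
  shows "F = {x \<in> dual X le. \<Inter>F \<subseteq> x} \<and> \<Inter>F \<noteq> {}"
proof -
  have df: "dual_filter X le F" using assms(2) unfolding closed_dual_filter_def by auto
  have eq: "F = {x \<in> dual X le. \<Inter>F \<subseteq> x}"
    using key[OF assms(2)] df unfolding dual_filter_def by auto
  have "{} \<in> dual X le" unfolding dual_def final_segment_def by auto
  then have "\<Inter>F \<noteq> {}" using key[OF assms(2)] df unfolding dual_filter_def by auto
  with eq show ?thesis by simp
qed

end
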